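(* Every idempotent in $\overline{\square}_\vee$ splits in $\overline{\square}_\vee$: for every $A \in \overline{\square}_\vee$ and every morphism $f \colon A \to A$ with $ff = f$, there exist $B \in \overline{\square}_\vee$ and morphisms $s \colon B \to A$, $r \colon A \to B$ in $\overline{\square}_\vee$ with $rs = \mathrm{id}_B$ and $sr = f$.
   Context: $\mathbf{SLat}$ is the category of (join-)semilattices—sets with an associative, commutative, idempotent binary operation $\vee$—and homomorphisms preserving $\vee$ (not necessarily preserving bounds or meets). Each semilattice is a poset via $x\le y\iff x\vee y=y$. $\overline{\square}_\vee$ is the full subcategory of $\mathbf{SLat}$ on the finite inhabited semilattices whose induced poset is a distributive lattice. *)

theory Defs
  imports Main
begin

definition semilattice_on :: "'a set \<Rightarrow> ('a \<Rightarrow> 'a \<Rightarrow> 'a) \<Rightarrow> bool" where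
  "semilattice_on A j \<longleftrightarrow>
     (\<forall>x\<in>A. \<forall>y\<in>A. j x y \<in> A) \<and>
     (\<forall>x\<in>A. \<forall>y\<in>A. \<forall>z\<in>A. j (j x y) z = j x (j y z)) \<and>
     (\<forall>x\<in>A. \<forall>y\<in>A. j x y = j y x) \<and>
     (\<forall>x\<in>A. j x x = x)"

definition sl_le :: "('a \<Rightarrow> 'a \<Rightarrow> 'a) \<Rightarrow> 'a \<Rightarrow> 'a \<Rightarrow> bool" where
  "sl_le j x y \<longleftrightarrow> j x y = y"

definition sl_is_meet :: "'a set \<Rightarrow> ('a \<Rightarrow> 'a \<Rightarrow> 'a) \<Rightarrow> 'a \<Rightarrow> 'a \<Rightarrow> 'a \<Rightarrow> bool" where
  "sl_is_meet A j x y m \<longleftrightarrow> m \<in> A \<and> sl_le j m x \<and> sl_le j m y \<and>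
     (\<forall>z\<in>A. sl_le j z x \<and> sl_le j z y \<longrightarrow> sl_le j z m)"

text \<open>The induced poset is a lattice (joins exist already; all binary meets exist)
  and it is distributive: x \<and> (y \<or> z) = (x \<and> y) \<or> (x \<and> z).\<close>
definition distrib_lattice_on :: "'a set \<Rightarrow> ('a \<Rightarrow> 'a \<Rightarrow> 'a) \<Rightarrow> bool" where
  "distrib_lattice_on A j \<longleftrightarrow>
     (\<forall>x\<in>A. \<forall>y\<in>A. \<exists>m. sl_is_meet A j x y m) \<and>
     (\<forall>x\<in>A. \<forall>y\<in>A. \<forall>z\<in>A. \<forall>m1 m2 m3.
        sl_is_meet A j x (j y z) m1 \<and> sl_is_meet A j x y m2 \<and> sl_is_meet A j x z m3
        \<longrightarrow> m1 = j m2 m3)"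

text \<open>Objects of the category: finite inhabited semilattices whose induced
  poset is a distributive lattice.\<close>
definition dlat_obj :: "'a set \<Rightarrow> ('a \<Rightarrow> 'a \<Rightarrow> 'a) \<Rightarrow> bool" where
  "dlat_obj A j \<longleftrightarrow> finite A \<and> A \<noteq> {} \<and> semilattice_on A j \<and> distrib_lattice_on A j"

text \<open>Morphisms: join-preserving maps between carriers.\<close>
definition sl_hom :: "'a set \<Rightarrow> ('a \<Rightarrow> 'a \<Rightarrow> 'a) \<Rightarrow> 'b set \<Rightarrow> ('b \<Rightarrow> 'b \<Rightarrow> 'b) \<Rightarrow> ('a \<Rightarrow> 'b) \<Rightarrow> bool" where
  "sl_hom A jA B jB f \<longleftrightarrow> (\<forall>x\<in>A. f x \<in> B) \<and> (\<forall>x\<in>A. \<forall>y\<in>A. f (jA x y) = jB (f x) (f y))"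

end

theory Submission
  imports Defs
begin

lemma meet_unique:
  assumes "semilattice_on A j" "sl_is_meet A j x y m" "sl_is_meet A j x y m'"
  shows "m = m'"
proof -
  have "sl_le j m m'" "sl_le j m' m" using assms(2,3) unfolding sl_is_meet_def by auto
  moreover have "m \<in> A" "m' \<in> A" using assms(2,3) unfolding sl_is_meet_def by auto
  ultimately show ?thesis using assms(1) unfolding semilattice_on_def sl_le_def by auto
qed

lemma meet_image:
  assumes sl: "semilattice_on A j" and h: "sl_hom A j A j f" and idem: "\<forall>x\<in>A. f (f x) = f x"
    and xy: "x \<in> f ` A" "y \<in> f ` A" and M: "sl_is_meet A j x y M"
  shows "sl_is_meet (f ` A) j x y (f M)"
proof -
  have MA: "M \<in> A" "j M x = x" "j M y = y" using M unfolding sl_is_meet_def sl_le_def by auto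
  have hA: "\<forall>x\<in>A. f x \<in> A" using h unfolding sl_hom_def by blast
  have fx: "f x = x" "f y = y" "x \<in> A" "y \<in> A" using xy idem hA by auto
  have "j (f M) x = x" using h MA fx unfolding sl_hom_def by metis
  moreover have "j (f M) y = y" using h MA fx unfolding sl_hom_def by metis
  moreover have "\<forall>z\<in>f ` A. sl_le j z x \<and> sl_le j z y \<longrightarrow> sl_le j z (f M)"
  proof (intro ballI impI)
    fix z assume z: "z \<in> f ` A" and le: "sl_le j z x \<and> sl_le j z y"
    have zA: "z \<in> A" "f z = z" using z idem hA by auto
    have "j z M = M" using M zA le unfolding sl_is_meet_def sl_le_def by auto
    hence "f (j z M) = f M" by simp
    thus "sl_le j z (f M)" using h zA MA unfolding sl_hom_def sl_le_def by metis
  qed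
  ultimately show ?thesis using MA unfolding sl_is_meet_def sl_le_def by auto
qed

theorem mainTheorem6:
  fixes A :: "'a set" and jA :: "'a \<Rightarrow> 'a \<Rightarrow> 'a" and f :: "'a \<Rightarrow> 'a"
  assumes "dlat_obj A jA"
    and "sl_hom A jA A jA f"
    and "\<forall>x\<in>A. f (f x) = f x"
  shows "\<exists>(B :: 'a set) (jB :: 'a \<Rightarrow> 'a \<Rightarrow> 'a) s r.
           dlat_obj B jB \<and> sl_hom B jB A jA s \<and> sl_hom A jA B jB r \<and>
           (\<forall>x\<in>B. r (s x) = x) \<and> (\<forall>x\<in>A. s (r x) = f x)"
proof -
  have fin: "finite A" "A \<noteq> {}" and sl: "semilattice_on A jA" and dl: "distrib_lattice_on A jA"
    using assms(1) unfolding dlat_obj_def by auto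
  note h = assms(2) and idem = assms(3)
  have sub: "f ` A \<subseteq> A" using h unfolding sl_hom_def by blast
  have clos: "\<forall>x\<in>f ` A. \<forall>y\<in>f ` A. jA x y \<in> f ` A"
  proof (intro ballI)
    fix x y assume "x \<in> f ` A" "y \<in> f ` A"
    then obtain a b where "a \<in> A" "b \<in> A" "x = f a" "y = f b" by auto
    moreover have "jA a b \<in> A" using sl \<open>a \<in> A\<close> \<open>b \<in> A\<close> unfolding semilattice_on_def by auto
    ultimately show "jA x y \<in> f ` A" using h unfolding sl_hom_def by force
  qed
  have slB: "semilattice_on (f ` A) jA"
  proof -
    have "\<forall>x\<in>f ` A. \<forall>y\<in>f ` A. \<forall>z\<in>f ` A. jA (jA x y) z = jA x (jA y z)"
      using sl sub unfolding semilattice_on_def by blast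
    moreover have "\<forall>x\<in>f ` A. \<forall>y\<in>f ` A. jA x y = jA y x"
      using sl sub unfolding semilattice_on_def by blast
    moreover have "\<forall>x\<in>f ` A. jA x x = x"
      using sl sub unfolding semilattice_on_def by blast
    ultimately show ?thesis using clos unfolding semilattice_on_def by blast
  qed
  have meetsA: "\<forall>x\<in>A. \<forall>y\<in>A. \<exists>m. sl_is_meet A jA x y m" using dl unfolding distrib_lattice_on_def by auto
  have distA: "\<And>x y z m1 m2 m3. x \<in> A \<Longrightarrow> y \<in> A \<Longrightarrow> z \<in> A \<Longrightarrow>
        sl_is_meet A jA x (jA y z) m1 \<Longrightarrow> sl_is_meet A jA x y m2 \<Longrightarrow> sl_is_meet A jA x z m3
        \<Longrightarrow> m1 = jA m2 m3" using dl unfolding distrib_lattice_on_def by blast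
  have meetB: "\<forall>x\<in>f ` A. \<forall>y\<in>f ` A. \<exists>m. sl_is_meet (f ` A) jA x y m"
  proof (intro ballI)
    fix x y assume xy: "x \<in> f ` A" "y \<in> f ` A"
    then obtain M where "sl_is_meet A jA x y M" using meetsA sub by blast
    thus "\<exists>m. sl_is_meet (f ` A) jA x y m" using meet_image[OF sl h idem xy] by blast
  qed
  have distB: "\<forall>x\<in>f ` A. \<forall>y\<in>f ` A. \<forall>z\<in>f ` A. \<forall>m1 m2 m3.
        sl_is_meet (f ` A) jA x (jA y z) m1 \<and> sl_is_meet (f ` A) jA x y m2 \<and> sl_is_meet (f ` A) jA x z m3
        \<longrightarrow> m1 = jA m2 m3"
  proof (intro ballI allI impI)
    fix x y z m1 m2 m3
    assume xyz: "x \<in> f ` A" "y \<in> f ` A" "z \<in> f ` A"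
      and ms: "sl_is_meet (f ` A) jA x (jA y z) m1 \<and> sl_is_meet (f ` A) jA x y m2 \<and> sl_is_meet (f ` A) jA x z m3"
    have yz: "jA y z \<in> f ` A" using clos xyz by auto
    obtain M1 where M1: "sl_is_meet A jA x (jA y z) M1" using meetsA sub xyz yz by blast
    obtain M2 where M2: "sl_is_meet A jA x y M2" using meetsA sub xyz by blast
    obtain M3 where M3: "sl_is_meet A jA x z M3" using meetsA sub xyz by blast
    have "m1 = f M1" using meet_unique[OF slB] ms meet_image[OF sl h idem xyz(1) yz M1] by blast
    moreover have "m2 = f M2" using meet_unique[OF slB] ms meet_image[OF sl h idem xyz(1,2) M2] by blast
    moreover have "m3 = f M3" using meet_unique[OF slB] ms meet_image[OF sl h idem xyz(1,3) M3] by blast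
    moreover have "M1 = jA M2 M3" using distA[OF _ _ _ M1 M2 M3] xyz sub by blast
    moreover have "M2 \<in> A" "M3 \<in> A" using M2 M3 unfolding sl_is_meet_def by auto
    ultimately show "m1 = jA m2 m3" using h unfolding sl_hom_def by auto
  qed
  have "dlat_obj (f ` A) jA"
  proof -
    have "finite (f ` A)" "f ` A \<noteq> {}" using fin by auto
    moreover have "distrib_lattice_on (f ` A) jA"
      unfolding distrib_lattice_on_def using meetB distB by (intro conjI)
    ultimately show ?thesis unfolding dlat_obj_def using slB by blast
  qed
  moreover have "sl_hom (f ` A) jA A jA id" using sub unfolding sl_hom_def by auto
  moreover have "sl_hom A jA (f ` A) jA f" using h unfolding sl_hom_def by blast
  moreover have "\<forall>x\<in>f ` A. f (id x) = x" using idem by auto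
  moreover have "\<forall>x\<in>A. id (f x) = f x" by auto
  ultimately show ?thesis by blast
qed

end
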